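(* Let $a,b,c$ be nonzero and $G_1,G_2$ parameters, and define the transformation (a Dehn twist, obtained as a composition of two generalized mutations) $$a'=\frac{b^2+c^2+G_1bc}{a},\qquad b'=\frac{(a')^2+c^2+G_2a'c}{b},\qquad c'=c.$$ Then the function $$G_\gamma=G_2\frac{c}{b}+G_1\frac{c}{a}+\frac{a}{b}+\frac{b}{a}+\frac{c^2}{ab}$$ is preserved by this transformation, i.e. $G_\gamma(a',b',c)=G_\gamma(a,b,c)$.
   Context: Here $a,b,c$ are $\lambda$-lengths of arcs on a Riemann sphere with three holes and two bordered cusps on one hole ($PV$ case), $G_1,G_2$ encode the perimeters of the two uncusped holes, and $G_\gamma$ is the geodesic function of the closed geodesic $\gamma$ encircling these two holes. The claim is an identity of rational functions. *)

theory Defs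
  imports Complex_Main
begin

definition Ggamma :: "real \<Rightarrow> real \<Rightarrow> real \<Rightarrow> real \<Rightarrow> real \<Rightarrow> real" where
  "Ggamma G1 G2 a b c = G2 * c / b + G1 * c / a + a / b + b / a + c^2 / (a * b)"

definition twist_a :: "real \<Rightarrow> real \<Rightarrow> real \<Rightarrow> real \<Rightarrow> real" where
  "twist_a G1 a b c = (b^2 + c^2 + G1 * b * c) / a"

definition twist_b :: "real \<Rightarrow> real \<Rightarrow> real \<Rightarrow> real \<Rightarrow> real \<Rightarrow> real" where
  "twist_b G1 G2 a b c = ((twist_a G1 a b c)^2 + c^2 + G2 * twist_a G1 a b c * c) / b"

end

theory Submission
  imports Defs
begin

theorem mainTheorem10:
  fixes a b c G1 G2 :: real
  assumes "a \<noteq> 0" and "b \<noteq> 0" and "c \<noteq> 0"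
    and "twist_a G1 a b c \<noteq> 0" and "twist_b G1 G2 a b c \<noteq> 0"
  shows "Ggamma G1 G2 (twist_a G1 a b c) (twist_b G1 G2 a b c) c = Ggamma G1 G2 a b c"
proof -
  define x where "x = twist_a G1 a b c"
  define y where "y = twist_b G1 G2 a b c"
  have hx: "x * a = b^2 + c^2 + G1*b*c" using assms(1) unfolding x_def twist_a_def by (simp add: field_simps)
  have hy: "y * b = x^2 + c^2 + G2*x*c" using assms(2) unfolding y_def twist_b_def x_def[symmetric] by (simp add: field_simps)
  have x0: "x \<noteq> 0" and y0: "y \<noteq> 0" using assms x_def y_def by auto
  have "G2 * c / y + G1 * c / x + x / y + y / x + c^2 / (x * y) = G2 * c / b + G1 * c / a + a / b + b / a + c^2 / (a * b)"
    using x0 y0 assms(1,2)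
    apply (simp add: field_simps)
    using hx hy by algebra
  thus ?thesis unfolding Ggamma_def x_def y_def .
qed

end
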